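(* Let $d\geq 10$ and let $g\in C^\infty([0,\infty))$ solve $$g''+\left(\frac{d-3}{y}-\frac{y}{2}\right)g'-\frac{d-2}{y^2}\,g(g-1)(g-2)=0\quad (y>0)$$ with $g(0)=g'(0)=0$ and $g''(0)=a>0$. Let $h(y)=y^3g'(y)$. Then $h'(y)>0$ for all $y>0$, and $\lim_{y\to\infty}h(y)=+\infty$. *)

theory Defs
  imports "HOL-Analysis.Analysis"
begin

text \<open>C-infinity on the closed half-line [0,oo): D is the sequence of derivatives,
  D 0 = g, and each D n is differentiable on [0,oo) (one-sided at 0) with derivative D (Suc n).\<close>
definition smooth_halfline :: "(real \<Rightarrow> real) \<Rightarrow> (nat \<Rightarrow> real \<Rightarrow> real) \<Rightarrow> bool" where
  "smooth_halfline g D \<longleftrightarrow> D 0 = g \<and>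
     (\<forall>n y. y \<ge> 0 \<longrightarrow> (D n has_real_derivative D (Suc n) y) (at y within {0..}))"

end

theory Submission
  imports Defs
begin

lemma dE_aux:
  fixes m :: nat and y :: real
  shows "((\<lambda>t. t^m * exp (-(t^2/4))) has_real_derivative
     (m*y^(m-1) - y^m*y/2) * exp (-(y^2/4))) (at y)"
  by (auto intro!: derivative_eq_intros simp: algebra_simps)

lemma dW_aux:
  fixes K :: "real \<Rightarrow> real" and m :: nat
  assumes dg: "(K has_real_derivative k) (at y)" "y > 0" "m > 0"
  shows "((\<lambda>t. t^m * exp (-(t^2/4)) * K t) has_real_derivative
     y^m * exp (-(y^2/4)) * (k - (y/2 - m/y) * K y)) (at y)"
proof -
  have e: "y^m = y * y^(m-1)" using assms(3) by (cases m) auto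
  have "((\<lambda>t. t^m * exp (-(t^2/4)) * K t) has_real_derivative
     (m*y^(m-1) - y^m*y/2) * exp (-(y^2/4)) * K y + k * (y^m * exp (-(y^2/4)))) (at y)"
    by (rule DERIV_mult[OF dE_aux dg(1)])
  moreover have "(m*y^(m-1) - y^m*y/2) * exp (-(y^2/4)) * K y + k * (y^m * exp (-(y^2/4)))
     = y^m * exp (-(y^2/4)) * (k - (y/2 - m/y) * K y)"
    unfolding e using assms(2) by (simp add: field_simps)
  ultimately show ?thesis by simp
qed

lemma dK_aux:
  fixes p q g :: "real \<Rightarrow> real" and c c6 :: real
  assumes dg: "(g has_real_derivative p y) (at y)" and dp: "(p has_real_derivative q y) (at y)"
  shows "((\<lambda>t. p t * (t^4/2 - c6*t^2) + c*t*(g t*(g t - 1)*(g t - 2))) has_real_derivative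
     q y*(y^4/2 - c6*y^2) + p y*(2*y^3 - 2*c6*y) + c*(g y*(g y - 1)*(g y - 2)) + c*y*(3*(g y)^2-6*g y+2)*p y) (at y)"
  by (auto intro!: derivative_eq_intros dg dp simp: algebra_simps power2_eq_square power3_eq_cube numeral_eq_Suc)

theorem mainTheorem6:
  fixes d :: nat and a :: real and g :: "real \<Rightarrow> real" and D :: "nat \<Rightarrow> real \<Rightarrow> real"
  assumes "d \<ge> 10"
    and "smooth_halfline g D"
    and "\<forall>y>0. D 2 y + ((real d - 3) / y - y / 2) * D 1 y
                - (real d - 2) / y^2 * (g y * (g y - 1) * (g y - 2)) = 0"
    and "g 0 = 0" and "D 1 0 = 0" and "D 2 0 = a" and "a > 0"
  shows "(\<forall>y>0. deriv (\<lambda>t. t^3 * D 1 t) y > 0)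
         \<and> filterlim (\<lambda>t. t^3 * D 1 t) at_top at_top"
proof -
  have D0: "D 0 = g" and dD: "\<And>n y. y \<ge> 0 \<Longrightarrow> (D n has_real_derivative D (Suc n) y) (at y within {0..})"
    using assms(2) unfolding smooth_halfline_def by auto
  have dDat: "(D n has_real_derivative D (Suc n) y) (at y)" if y: "y > 0" for n y
  proof -
    have "(D n has_real_derivative D (Suc n) y) (at y within {0<..})"
      using dD[of y n] y by (auto intro: DERIV_subset)
    moreover have "at y within {0<..} = at y" by (rule at_within_open) (use y in auto)
    ultimately show ?thesis by simp
  qed
  have contD: "continuous_on {0..} (D n)" for n
    unfolding continuous_on_eq_continuous_within using dD DERIV_continuous by blast
  define p where "p = D 1"
  define q where "q = D 2"
  define c where "c = real d"
  define m where "m = d - 7"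
  have c10: "c \<ge> 10" using assms(1) unfolding c_def by simp
  have m3: "m > 0" using assms(1) unfolding m_def by simp
  have rm: "real m = c - 7" using assms(1) unfolding m_def c_def by auto
  define K where "K = (\<lambda>y. p y * (y^4/2 - (c-6)*y^2) + (c-2)*y*(g y*(g y - 1)*(g y - 2)))"
  define Kp where "Kp = (\<lambda>y. q y*(y^4/2 - (c-6)*y^2) + p y*(2*y^3 - 2*(c-6)*y)
       + (c-2)*(g y*(g y - 1)*(g y - 2)) + (c-2)*y*(3*(g y)^2-6*g y+2)*p y)"
  define B where "B = (\<lambda>y. 2*(c-6) + (c-2)*(3*(g y)^2-6*g y+2))"
  define W where "W = (\<lambda>t. t^m * exp (-(t^2/4)) * K t)"
  define H where "H = (\<lambda>t::real. t^3 * D 1 t)"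
  have dg: "(g has_real_derivative p y) (at y)" if "y > 0" for y
    using dDat[OF that, of 0] D0 by (simp add: p_def)
  have dp: "(p has_real_derivative q y) (at y)" if "y > 0" for y
    using dDat[OF that, of 1] by (simp add: p_def q_def numeral_2_eq_2)
  have ode: "q y = - (((c - 3)/y - y/2) * p y) + (c-2)/y^2*(g y*(g y-1)*(g y-2))" if y: "y > 0" for y
  proof -
    have "D 2 y + ((real d - 3) / y - y / 2) * D 1 y
                - (real d - 2) / y^2 * (g y * (g y - 1) * (g y - 2)) = 0" using assms(3) y by blast
    then show ?thesis unfolding c_def p_def q_def by linarith
  qed
  have k0: "3*y^2 * p y + y^3 * q y = K y" if y: "y > 0" for y
    unfolding ode[OF y] K_def using y by (simp add: field_simps power2_eq_square power3_eq_cube) (simp add: algebra_simps numeral_eq_Suc)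
  have dH: "(H has_real_derivative K y) (at y)" if y: "y > 0" for y
  proof -
    have "(H has_real_derivative (3*y^2 * p y + y^3 * q y)) (at y)"
      unfolding H_def using dp[OF y] by (auto intro!: derivative_eq_intros simp: p_def algebra_simps)
    then show ?thesis using k0[OF y] by simp
  qed
  have dK: "(K has_real_derivative Kp y) (at y)" if y: "y > 0" for y
    unfolding K_def Kp_def by (rule dK_aux[where g=g and p=p and q=q and y=y, OF dg[OF y] dp[OF y]])
  have iden: "Kp y - (y/2 - real m/y) * K y = y * p y * B y" if y: "y > 0" for y
    unfolding Kp_def K_def B_def rm ode[OF y] using y
    by (simp add: field_simps power2_eq_square power3_eq_cube) (simp add: algebra_simps numeral_eq_Suc)
  have dW: "(W has_real_derivative y^m * exp (-(y^2/4)) * (y * p y * B y)) (at y)" if y: "y > 0" for y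
    using dW_aux[OF dK[OF y] y m3] iden[OF y] unfolding W_def by simp
  have Bnn: "B y \<ge> 0" for y
  proof -
    have "B y = (c-10) + (c-2)*(3*(g y - 1)^2)" unfolding B_def by (simp add: algebra_simps power2_eq_square)
    moreover have "(c-2)*(3*(g y - 1)^2) \<ge> 0" using c10 by simp
    ultimately show ?thesis using c10 by linarith
  qed
  have contK: "continuous_on {u..v} K" if "u > 0" for u v
    using that by (intro continuous_at_imp_continuous_on ballI DERIV_isCont[OF dK]) auto
  have ppos: "p x > 0" if x: "x > 0" and Kb: "\<forall>t. 0 < t \<and> t < x \<longrightarrow> K t > 0" for x
  proof -
    have cH: "continuous_on {0..x} H"
      unfolding H_def by (intro continuous_intros continuous_on_subset[OF contD]) auto
    have "H differentiable (at t)" if "0 < t" "t < x" for t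
      using dH[of t] that by (auto simp: real_differentiable_def)
    then obtain l z where z: "0 < z" "z < x" "DERIV H z :> l" "H x - H 0 = (x - 0) * l"
      using MVT[OF x cH] by blast
    have "l = K z" using DERIV_unique[OF z(3) dH[OF z(1)]] .
    then have "x^3 * p x = x * K z" using z(4) unfolding H_def p_def by simp
    moreover have "x * K z > 0" using Kb z x by simp
    ultimately have "x^3 * p x > 0" by simp
    then show ?thesis using x by (simp add: zero_less_mult_iff)
  qed
  have Wmono: "W u \<le> W v" if uv: "0 < u" "u < v" and pn: "\<forall>t. u \<le> t \<and> t \<le> v \<longrightarrow> p t \<ge> 0" for u v
  proof -
    obtain z where z: "u < z" "z < v" "W v - W u = (v - u) * (z^m * exp (-(z^2/4)) * (z * p z * B z))"
      using MVT2[OF uv(2), of W "\<lambda>y. y^m * exp (-(y^2/4)) * (y * p y * B y)"] dW uv by force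
    have X: "z^m * exp (-(z^2/4)) * (z * p z * B z) \<ge> 0"
      using z uv pn Bnn[of z] by (intro mult_nonneg_nonneg) auto
    have "(v - u) * (z^m * exp (-(z^2/4)) * (z * p z * B z)) \<ge> 0"
      using uv mult_nonneg_nonneg[OF _ X, of "v - u"] by simp
    then show ?thesis using z(3) by linarith
  qed
  have Wpos: "W u > 0" if "u > 0" "K u > 0" for u
    unfolding W_def using that by simp
  obtain \<delta> where \<delta>: "\<delta> > 0" "\<forall>y. 0 < y \<and> y < \<delta> \<longrightarrow> K y > 0"
  proof -
    have "((\<lambda>y. (D 1 y - D 1 0) / (y - 0)) \<longlongrightarrow> D 2 0) (at 0 within {0..})"
      using dD[of 0 1] by (simp add: has_field_derivative_iff numeral_2_eq_2)
    then have t1: "((\<lambda>y. p y / y) \<longlongrightarrow> a) (at_right 0)"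
      using assms(5,6) by (auto simp: p_def intro: tendsto_within_subset)
    have "continuous (at 0 within {0..}) q"
      using contD[of 2] unfolding q_def by (simp add: continuous_on_eq_continuous_within)
    then have "(q \<longlongrightarrow> a) (at 0 within {0..})" using assms(6) by (simp add: continuous_within q_def)
    then have t2: "(q \<longlongrightarrow> a) (at_right 0)" by (auto intro: tendsto_within_subset)
    have t3: "((\<lambda>y. 3 * (p y / y) + q y) \<longlongrightarrow> 3 * a + a) (at_right 0)"
      by (intro tendsto_intros t1 t2)
    have "eventually (\<lambda>y. 3 * (p y / y) + q y > 0) (at_right 0)"
      using order_tendstoD(1)[OF t3, of 0] assms(7) by simp
    then have "eventually (\<lambda>y. K y > 0) (at_right (0::real))"
      using eventually_at_right_less[of "0::real"]
    proof eventually_elim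
      case (elim y)
      have "K y = y^3 * (3 * (p y / y) + q y)" using k0[of y] elim
        by (simp add: field_simps power2_eq_square power3_eq_cube)
      then show ?case using elim by simp
    qed
    then obtain b where "b > 0" "\<forall>y>0. y < b \<longrightarrow> K y > 0"
      unfolding eventually_at_right_field by auto
    then show ?thesis using that by auto
  qed
  have allpos: "\<forall>y>0. K y > 0"
  proof (rule ccontr)
    assume "\<not> (\<forall>y>0. K y > 0)"
    then obtain y1 where y1: "y1 > 0" "K y1 \<le> 0" by (auto simp: not_less)
    define u where "u = \<delta>/2"
    have u: "u > 0" "u < \<delta>" "K u > 0" using \<delta> unfolding u_def by auto
    have uy1: "u < y1"
    proof (rule ccontr)
      assume "\<not> u < y1" then have "y1 < \<delta>" using u by simp
      then show False using \<delta> y1 by auto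
    qed
    define S where "S = {t \<in> {u..y1}. K t \<le> 0}"
    have clS: "closed S" unfolding S_def
      by (rule continuous_on_closed_Collect_le[OF contK[OF u(1)] continuous_on_const closed_atLeastAtMost])
    have y1S: "y1 \<in> S" using y1 uy1 unfolding S_def by auto
    have bS: "bdd_below S" unfolding S_def by (rule bdd_belowI[of _ u]) auto
    define y0 where "y0 = Inf S"
    have y0S: "y0 \<in> S" unfolding y0_def using closed_contains_Inf[OF _ bS clS] y1S by auto
    then have y0: "u \<le> y0" "y0 \<le> y1" "K y0 \<le> 0" unfolding S_def by auto
    have below: "\<forall>t. 0 < t \<and> t < y0 \<longrightarrow> K t > 0"
    proof (intro allI impI)
      fix t assume t: "0 < t \<and> t < y0"
      show "K t > 0"
      proof (cases "t < \<delta>")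
        case True then show ?thesis using \<delta> t by auto
      next
        case False
        show ?thesis
        proof (rule ccontr)
          assume "\<not> K t > 0"
          then have "t \<in> S" using False t y0 u unfolding S_def by auto
          then have "y0 \<le> t" unfolding y0_def using bS by (rule cInf_lower)
          then show False using t by simp
        qed
      qed
    qed
    have uy0: "u < y0" using y0 u by (cases "u = y0") auto
    have "p t \<ge> 0" if "u \<le> t" "t \<le> y0" for t
    proof -
      have "\<forall>s. 0 < s \<and> s < t \<longrightarrow> K s > 0" using below that by auto
      then show ?thesis using ppos[of t] that u by fastforce
    qed
    then have "W u \<le> W y0" using Wmono[OF u(1) uy0] by blast
    moreover have "W u > 0" using Wpos u by simp
    moreover have "W y0 \<le> 0" unfolding W_def using y0 u
      by (intro mult_nonneg_nonpos) auto
    ultimately show False by simp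
  qed
  have part1: "\<forall>y>0. deriv (\<lambda>t. t^3 * D 1 t) y > 0"
    using allpos dH DERIV_imp_deriv unfolding H_def by fastforce
  have pp: "p t > 0" if "t > 0" for t using ppos[OF that] allpos by auto
  define W1 where "W1 = W 1"
  have W1: "W1 > 0" unfolding W1_def using Wpos allpos by simp
  define e0 where "e0 = (1 / (4 * real m))^m"
  have e0: "e0 > 0" unfolding e0_def using m3 by simp
  have Klow: "K y \<ge> W1 * e0" if y: "y \<ge> 1" for y
  proof -
    have "W1 \<le> W y"
    proof (cases "y = 1")
      case False
      have "\<forall>t. 1 \<le> t \<and> t \<le> y \<longrightarrow> p t \<ge> 0" using pp by (auto intro!: less_imp_le)
      moreover have "1 < y" using y False by simp
      ultimately show ?thesis unfolding W1_def using Wmono[of 1 y] by simp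
    qed (simp add: W1_def)
    define x where "x = y^2 / (4 * real m)"
    have x0: "x \<ge> 0" unfolding x_def using m3 by simp
    have "exp (y^2/4) = exp (real m * x)" unfolding x_def using m3 by simp
    also have "\<dots> = exp x ^ m" by (rule exp_of_nat_mult)
    finally have ex: "exp (y^2/4) = exp x ^ m" .
    have "x \<le> exp x" using exp_ge_add_one_self[of x] by linarith
    then have "x ^ m \<le> exp x ^ m" using x0 by (intro power_mono) auto
    moreover have "y / (4 * real m) \<le> x" unfolding x_def using y m3
      by (intro divide_right_mono) (auto simp: power2_eq_square)
    then have "(y / (4 * real m)) ^ m \<le> x ^ m" using y m3 by (intro power_mono) auto
    ultimately have "y^m * e0 \<le> exp (y^2/4)" using ex unfolding e0_def
      by (simp add: power_divide power_mult_distrib) 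
    define A where "A = y^m * exp (-(y^2/4))"
    have A: "A > 0" unfolding A_def using y by simp
    have ee: "exp (y^2/4) * exp (-(y^2/4)) = 1" by (simp add: exp_minus_inverse)
    have "y^m * e0 * exp (-(y^2/4)) \<le> exp (y^2/4) * exp (-(y^2/4))"
      using \<open>y^m * e0 \<le> exp (y^2/4)\<close> by (rule mult_right_mono) simp
    then have Ae: "A * e0 \<le> 1" unfolding A_def ee by (simp add: algebra_simps)
    have WA: "W y = A * K y" unfolding W_def A_def by simp
    show ?thesis
    proof (rule ccontr)
      assume "\<not> ?thesis"
      then have "K y < W1 * e0" by simp
      then have "A * K y < A * (W1 * e0)" using A by simp
      also have "\<dots> = W1 * (A * e0)" by simp
      also have "\<dots> \<le> W1" using Ae W1 by (simp add: mult_left_le)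
      finally show False using \<open>W1 \<le> W y\<close> WA by simp
    qed
  qed
  define \<epsilon> where "\<epsilon> = W1 * e0"
  have eps: "\<epsilon> > 0" unfolding \<epsilon>_def using W1 e0 by simp
  have Hlow: "H y \<ge> H 1 + (y - 1) * \<epsilon>" if y: "y > 1" for y
  proof -
    obtain z where z: "1 < z" "z < y" "H y - H 1 = (y - 1) * K z"
      using MVT2[OF y, of H K] dH by force
    have Kz: "K z \<ge> \<epsilon>" using Klow z unfolding \<epsilon>_def by simp
    have "(y - 1) * \<epsilon> \<le> (y - 1) * K z" using mult_left_mono[OF Kz, of "y - 1"] y by simp
    then show ?thesis using z(3) by linarith
  qed
  have part2: "filterlim H at_top at_top"
    unfolding filterlim_at_top
  proof
    fix Z :: real
    show "eventually (\<lambda>y. Z \<le> H y) at_top"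
      unfolding eventually_at_top_linorder
    proof (intro exI allI impI)
      fix y assume y: "y \<ge> max 2 (1 + (Z - H 1) / \<epsilon>)"
      then have "y > 1" by simp
      have "(y - 1) * \<epsilon> \<ge> ((Z - H 1) / \<epsilon>) * \<epsilon>" using y eps by (intro mult_right_mono) auto
      then have "(y - 1) * \<epsilon> \<ge> Z - H 1" using eps by simp
      then show "Z \<le> H y" using Hlow[OF \<open>y > 1\<close>] by simp
    qed
  qed
  show ?thesis using part1 part2 unfolding H_def by simp
qed

end
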